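(* Let $L$ be a PG-lattice and $M$ a faithful multiplication PG-lattice $L$-module with $I_M$ compact, and let $\delta_1(A)=(\sqrt{(A:I_M)})I_M$. If $N\in M$ is proper, then $\sqrt{(N:K)}\,K\leqslant\delta_1(N)$ for every proper element $K\in M$ with $K\not\leqslant N$.
   Context: $L$ is a multiplicative lattice (complete lattice with commutative, associative multiplication distributing over arbitrary joins, identity $1$, least $0$), compactly generated, $1$ compact, finite products of compact elements compact; $L_\ast$ = compact elements. An $L$-module is a complete lattice $M$ (least $O_M$, greatest $I_M$) with product $aB\in M$ satisfying $(\bigvee a_\alpha)A=\bigvee(a_\alpha A)$, $a(\bigvee A_\alpha)=\bigvee(aA_\alpha)$, $(ab)A=a(bA)$, $1A=A$, $0A=O_M$. $(A:B)=\bigvee\{x\in L:xB\leqslant A\}$ for $A,B\in M$; $\sqrt a=\bigvee\{x\in L_\ast:x^n\leqslant a\text{ for some }n\in\mathbb Z_+\}$. $e\in L$ is principal if $a\wedge be=((a:e)\wedge b)e$ and $(ae\vee b):e=(b:e)\vee a$ for all $a,b$; $L$ is a PG-lattice if every element is a join of principal elements. $N\in M$ is principal if $(b\wedge(B:N))N=bN\wedge B$ and $b\vee(B:N)=((bN\vee B):N)$ for all $b\in L,B\in M$; $M$ is a PG-lattice module if every element is a join of principal elements. $M$ is faithful if $(O_M:I_M)=0$; a multiplication module if every element of $M$ is $aI_M$ for some $a\in L$. Proper means $<I_M$. *)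

theory Defs
  imports Main
begin

definition compact_el :: "'a::complete_lattice \<Rightarrow> bool" where
  "compact_el c \<longleftrightarrow> (\<forall>S. c \<le> Sup S \<longrightarrow> (\<exists>F. finite F \<and> F \<subseteq> S \<and> c \<le> Sup F))"

text \<open>Includes the standing assumptions: compactly generated,
  one compact, products of compact elements compact.\<close>
definition mult_lattice :: "('a::complete_lattice \<Rightarrow> 'a \<Rightarrow> 'a) \<Rightarrow> 'a \<Rightarrow> bool" where
  "mult_lattice mult one \<longleftrightarrow>
     (\<forall>a b. mult a b = mult b a) \<and>
     (\<forall>a b c. mult (mult a b) c = mult a (mult b c)) \<and>
     (\<forall>a S. mult a (Sup S) = Sup ((\<lambda>s. mult a s) ` S)) \<and>
     (\<forall>a. mult one a = a) \<and>
     (\<forall>x::'a. x = Sup {c. compact_el c \<and> c \<le> x}) \<and>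
     compact_el one \<and>
     (\<forall>a b. compact_el a \<longrightarrow> compact_el b \<longrightarrow> compact_el (mult a b))"

definition L_module :: "('a::complete_lattice \<Rightarrow> 'a \<Rightarrow> 'a) \<Rightarrow> 'a \<Rightarrow> ('a \<Rightarrow> 'm::complete_lattice \<Rightarrow> 'm) \<Rightarrow> bool" where
  "L_module mult one act \<longleftrightarrow>
     (\<forall>S A. act (Sup S) A = Sup ((\<lambda>a. act a A) ` S)) \<and>
     (\<forall>a T. act a (Sup T) = Sup (act a ` T)) \<and>
     (\<forall>a b A. act (mult a b) A = act a (act b A)) \<and>
     (\<forall>A. act one A = A) \<and>
     (\<forall>A. act bot A = bot)"

text \<open>Residual (A:B) = join of all x with xB \<le> A (also used in L with act = mult).\<close>
definition res :: "('a::complete_lattice \<Rightarrow> 'm::complete_lattice \<Rightarrow> 'm) \<Rightarrow> 'm \<Rightarrow> 'm \<Rightarrow> 'a" where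
  "res act A B = Sup {x. act x B \<le> A}"

primrec mpow :: "('a \<Rightarrow> 'a \<Rightarrow> 'a) \<Rightarrow> 'a \<Rightarrow> 'a \<Rightarrow> nat \<Rightarrow> 'a" where
  "mpow mult one x 0 = one"
| "mpow mult one x (Suc n) = mult x (mpow mult one x n)"

definition rad :: "('a::complete_lattice \<Rightarrow> 'a \<Rightarrow> 'a) \<Rightarrow> 'a \<Rightarrow> 'a \<Rightarrow> 'a" where
  "rad mult one a = Sup {x. compact_el x \<and> (\<exists>n::nat. n \<ge> 1 \<and> mpow mult one x n \<le> a)}"

definition principal_el :: "('a::complete_lattice \<Rightarrow> 'a \<Rightarrow> 'a) \<Rightarrow> 'a \<Rightarrow> bool" where
  "principal_el mult e \<longleftrightarrow>
     (\<forall>a b. inf a (mult b e) = mult (inf (res mult a e) b) e) \<and>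
     (\<forall>a b. res mult (sup (mult a e) b) e = sup (res mult b e) a)"

definition PG_lattice :: "('a::complete_lattice \<Rightarrow> 'a \<Rightarrow> 'a) \<Rightarrow> bool" where
  "PG_lattice mult \<longleftrightarrow> (\<forall>x. \<exists>S. (\<forall>e\<in>S. principal_el mult e) \<and> x = Sup S)"

definition principal_mod_el :: "('a::complete_lattice \<Rightarrow> 'm::complete_lattice \<Rightarrow> 'm) \<Rightarrow> 'm \<Rightarrow> bool" where
  "principal_mod_el act N \<longleftrightarrow>
     (\<forall>b B. act (inf b (res act B N)) N = inf (act b N) B) \<and>
     (\<forall>b B. sup b (res act B N) = res act (sup (act b N) B) N)"

definition PG_module :: "('a::complete_lattice \<Rightarrow> 'm::complete_lattice \<Rightarrow> 'm) \<Rightarrow> bool" where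
  "PG_module act \<longleftrightarrow> (\<forall>X. \<exists>S. (\<forall>N\<in>S. principal_mod_el act N) \<and> X = Sup S)"

definition faithful :: "('a::complete_lattice \<Rightarrow> 'm::complete_lattice \<Rightarrow> 'm) \<Rightarrow> bool" where
  "faithful act \<longleftrightarrow> res act bot top = bot"

definition multiplication_module :: "('a::complete_lattice \<Rightarrow> 'm::complete_lattice \<Rightarrow> 'm) \<Rightarrow> bool" where
  "multiplication_module act \<longleftrightarrow> (\<forall>A. \<exists>a. A = act a top)"

definition delta1 :: "('a::complete_lattice \<Rightarrow> 'a \<Rightarrow> 'a) \<Rightarrow> 'a \<Rightarrow> ('a \<Rightarrow> 'm::complete_lattice \<Rightarrow> 'm) \<Rightarrow> 'm \<Rightarrow> 'm" where
  "delta1 mult one act A = act (rad mult one (res act A top)) top"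

end

theory Submission
  imports Defs
begin

lemma act_mono1:
  assumes "L_module mult one act" "a \<le> b"
  shows "act a A \<le> act b A"
proof -
  have "act (Sup {a,b}) A = Sup ((\<lambda>x. act x A) ` {a,b})"
    using assms(1) unfolding L_module_def by blast
  moreover have "Sup {a,b} = b" using assms(2) by (simp add: sup_absorb2)
  ultimately show ?thesis by (metis Sup_upper image_insert insertI1)
qed

lemma act_mono2:
  assumes "L_module mult one act" "A \<le> B"
  shows "act a A \<le> act a B"
proof -
  have "act a (Sup {A,B}) = Sup (act a ` {A,B})"
    using assms(1) unfolding L_module_def by blast
  moreover have "Sup {A,B} = B" using assms(2) by (simp add: sup_absorb2)
  ultimately show ?thesis by (metis Sup_upper image_insert insertI1)
qed

lemma act_res_le:
  assumes "L_module mult one act"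
  shows "act (res act N K) K \<le> N"
proof -
  have "act (res act N K) K = Sup ((\<lambda>y. act y K) ` {x. act x K \<le> N})"
    using assms unfolding L_module_def res_def by blast
  also have "\<dots> \<le> N" by (auto intro: Sup_least)
  finally show ?thesis .
qed

lemma le_res:
  assumes "act x K \<le> N"
  shows "x \<le> res act N K"
  unfolding res_def using assms by (auto intro: Sup_upper)

theorem theorem3p29:
  fixes mult :: "'a::complete_lattice \<Rightarrow> 'a \<Rightarrow> 'a" and one :: 'a
    and act :: "'a \<Rightarrow> 'm::complete_lattice \<Rightarrow> 'm"
    and N :: 'm
  assumes "mult_lattice mult one"
    and "PG_lattice mult"
    and "L_module mult one act"
    and "faithful act"
    and "multiplication_module act"
    and "PG_module act"
    and "compact_el (top :: 'm)"
    and "N < top"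
  shows "\<forall>K. K < top \<and> \<not> K \<le> N \<longrightarrow>
           act (rad mult one (res act N K)) K \<le> delta1 mult one act N"
proof (intro allI impI)
  fix K :: 'm
  note MLa = assms(1)[unfolded mult_lattice_def]
  note LM = assms(3)[unfolded L_module_def]
  have comm: "\<And>a b. mult a b = mult b a" using MLa by blast
  have actmult: "\<And>a b A. act (mult a b) A = act a (act b A)" using LM by blast
  have actsupL: "\<And>S A. act (Sup S) A = Sup ((\<lambda>a. act a A) ` S)" using LM by blast
  have multsup: "\<And>a S. mult a (Sup S) = Sup ((\<lambda>s. mult a s) ` S)" using MLa by blast
  have cg: "\<And>x::'a. x = Sup {c. compact_el c \<and> c \<le> x}" using MLa by blast
  have cm: "\<And>a b. compact_el a \<Longrightarrow> compact_el b \<Longrightarrow> compact_el (mult a b)" using MLa by blast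
  obtain k where k: "K = act k top" using assms(5) unfolding multiplication_module_def by blast
  define R where "R = rad mult one (res act N top)"
  have shrink: "\<And>c. act c K \<le> K"
  proof -
    fix c
    have "act c K = act k (act c top)" unfolding k
      by (metis actmult comm)
    also have "\<dots> \<le> act k top" by (rule act_mono2[OF assms(3)]) simp
    finally show "act c K \<le> K" using k by simp
  qed
  have key: "act x K \<le> act R top" if xc: "compact_el x" and n: "n \<ge> 1"
    and xn: "mpow mult one x n \<le> res act N K" for x n
  proof -
    obtain m where nm: "n = Suc m" using n by (cases n) auto
    have ind: "act (mpow mult one (mult x c) (Suc j)) top \<le> act (mpow mult one x (Suc j)) K"
      if "c \<le> k" for c j
    proof (induction j)
      case 0
      have "act (mpow mult one (mult x c) (Suc 0)) top = act x (act c top)"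
        by (simp add: actmult LM)
      also have "\<dots> \<le> act x K" unfolding k
        by (rule act_mono2[OF assms(3)], rule act_mono1[OF assms(3) that])
      also have "\<dots> = act (mpow mult one x (Suc 0)) K" by (simp add: actmult LM)
      finally show ?case .
    next
      case (Suc j)
      let ?y = "mpow mult one x (Suc j)"
      have "act (mpow mult one (mult x c) (Suc (Suc j))) top
            = act x (act c (act (mpow mult one (mult x c) (Suc j)) top))"
        by (simp only: mpow.simps actmult)
      also have "\<dots> \<le> act x (act c (act ?y K))"
        by (rule act_mono2[OF assms(3)], rule act_mono2[OF assms(3)], rule Suc.IH)
      also have "act c (act ?y K) = act ?y (act c K)" by (metis actmult comm)
      also have "act x (act ?y (act c K)) \<le> act x (act ?y K)"
        by (rule act_mono2[OF assms(3)], rule act_mono2[OF assms(3)], rule shrink)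
      also have "\<dots> = act (mpow mult one x (Suc (Suc j))) K" by (simp only: mpow.simps actmult)
      finally show ?case .
    qed
    have "act x K = act (mult x k) top" unfolding k by (simp add: actmult)
    also have "mult x k = Sup ((\<lambda>c. mult x c) ` {c. compact_el c \<and> c \<le> k})"
      by (subst cg[of k], rule multsup)
    also have "act (Sup ((\<lambda>c. mult x c) ` {c. compact_el c \<and> c \<le> k})) top
       = Sup ((\<lambda>a. act a top) ` ((\<lambda>c. mult x c) ` {c. compact_el c \<and> c \<le> k}))"
      by (rule actsupL)
    also have "\<dots> \<le> act R top"
    proof (rule Sup_least, clarify)
      fix c assume cc: "compact_el c" and ck: "c \<le> k"
      have "act (mpow mult one (mult x c) n) top \<le> N"
        unfolding nm
        using order_trans[OF ind[OF ck, of m]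
            order_trans[OF act_mono1[OF assms(3) xn[unfolded nm]] act_res_le[OF assms(3)]]] .
      hence "mpow mult one (mult x c) n \<le> res act N top" by (rule le_res)
      hence "mult x c \<le> R" unfolding R_def rad_def
        using cm[OF xc cc] n by (auto intro!: Sup_upper)
      thus "act (mult x c) top \<le> act R top" by (rule act_mono1[OF assms(3)])
    qed
    finally show ?thesis .
  qed
  have "act (rad mult one (res act N K)) K
      = Sup ((\<lambda>a. act a K) ` {x. compact_el x \<and> (\<exists>n::nat. n \<ge> 1 \<and> mpow mult one x n \<le> res act N K)})"
    unfolding rad_def by (rule actsupL)
  also have "\<dots> \<le> act R top" using key by (auto intro!: Sup_least)
  finally show "act (rad mult one (res act N K)) K \<le> delta1 mult one act N"
    unfolding delta1_def R_def .
qed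

end
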